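(* Let $G$ be a word hyperbolic group and $0\to\mathbb Z\xrightarrow{\iota}E\xrightarrow{\pi}G\to1$ a central extension. Let $X$ be a finite set with a map to $E$ whose image is a symmetric generating set of $E$; write $\overline w\in E$ for the evaluation of $w\in X^*$ and $\pi(\overline w)$ for its image in $G$. Then there exists $C>0$ (an integer) such that for every $g\in G$ the maximum $$\max\{\overline w\,\iota(-C\,\mathrm{len}(w)) : w\in X^*,\ \pi(\overline w)=g\}$$ exists with respect to the natural total order on the fibre $\pi^{-1}(g)$. Moreover, there then exists $\lambda>0$ such that every word $w$ achieving this maximum defines a $(\lambda,0)$-quasigeodesic path in the Cayley graph of $G$ with respect to the generating set $\pi(\overline X)$.
   Context: The total order on a fibre $\pi^{-1}(g)$: for $h_1,h_2\in\pi^{-1}(g)$, $h_1\le h_2$ iff $h_2h_1^{-1}=\iota(n)$ with $n\ge 0$. A word $w=x_1\cdots x_n$ defines the path in the Cayley graph of $G$ through the vertices $\pi(\overline{x_1\cdots x_t})$, $t=0,\dots,n$. *)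

theory Defs
  imports Complex_Main "HOL-Algebra.Algebra"
begin

definition word_eval :: "('g, 'b) monoid_scheme \<Rightarrow> ('x \<Rightarrow> 'g) \<Rightarrow> 'x list \<Rightarrow> 'g" where
  "word_eval G phi w = foldr (\<lambda>x acc. phi x \<otimes>\<^bsub>G\<^esub> acc) w \<one>\<^bsub>G\<^esub>"

(* Word metric on G w.r.t. a (symmetric, generating) set S: d(a,b) = length of a
   shortest word over S representing a^{-1} b, i.e. the graph distance in the
   Cayley graph with edges g -- g s. *)
definition word_dist :: "('g, 'b) monoid_scheme \<Rightarrow> 'g set \<Rightarrow> 'g \<Rightarrow> 'g \<Rightarrow> nat" where
  "word_dist G S a b =
     (LEAST n. \<exists>ws. set ws \<subseteq> S \<and> length ws = n \<and> word_eval G id ws = inv\<^bsub>G\<^esub> a \<otimes>\<^bsub>G\<^esub> b)"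

definition gromov_product :: "('g, 'b) monoid_scheme \<Rightarrow> 'g set \<Rightarrow> 'g \<Rightarrow> 'g \<Rightarrow> 'g \<Rightarrow> real" where
  "gromov_product G S w x y =
     (real (word_dist G S w x) + real (word_dist G S w y) - real (word_dist G S x y)) / 2"

(* Word hyperbolic group: a group with a finite symmetric generating set whose
   word metric (= vertex set of the Cayley graph) is Gromov delta-hyperbolic. *)
definition hyperbolic_group :: "('g, 'b) monoid_scheme \<Rightarrow> bool" where
  "hyperbolic_group G \<longleftrightarrow> group G \<and>
     (\<exists>S (\<delta>::real). finite S \<and> S \<subseteq> carrier G \<and> (\<forall>s\<in>S. inv\<^bsub>G\<^esub> s \<in> S) \<and>
        generate G S = carrier G \<and> \<delta> \<ge> 0 \<and>
        (\<forall>w\<in>carrier G. \<forall>x\<in>carrier G. \<forall>y\<in>carrier G. \<forall>z\<in>carrier G.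
           gromov_product G S w x y \<ge>
             min (gromov_product G S w x z) (gromov_product G S w y z) - \<delta>))"

definition central_extension ::
  "(int \<Rightarrow> 'e) \<Rightarrow> ('e, 'b) monoid_scheme \<Rightarrow> ('e \<Rightarrow> 'g) \<Rightarrow> ('g, 'c) monoid_scheme \<Rightarrow> bool" where
  "central_extension iota E pr G \<longleftrightarrow> group E \<and> group G \<and>
     iota \<in> hom integer_group E \<and> inj iota \<and>
     pr \<in> hom E G \<and> pr ` carrier E = carrier G \<and>
     kernel E G pr = range iota \<and>
     (\<forall>n. \<forall>e\<in>carrier E. iota n \<otimes>\<^bsub>E\<^esub> e = e \<otimes>\<^bsub>E\<^esub> iota n)"

definition fibre_le :: "(int \<Rightarrow> 'e) \<Rightarrow> ('e, 'b) monoid_scheme \<Rightarrow> 'e \<Rightarrow> 'e \<Rightarrow> bool" where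
  "fibre_le iota E h1 h2 \<longleftrightarrow> (\<exists>n::int. n \<ge> 0 \<and> h2 \<otimes>\<^bsub>E\<^esub> inv\<^bsub>E\<^esub> h1 = iota n)"

definition quasigeodesic_path :: "('g \<Rightarrow> 'g \<Rightarrow> nat) \<Rightarrow> real \<Rightarrow> real \<Rightarrow> (nat \<Rightarrow> 'g) \<Rightarrow> nat \<Rightarrow> bool" where
  "quasigeodesic_path d lam eps p n \<longleftrightarrow>
     (\<forall>s\<le>n. \<forall>t\<le>n.
        \<bar>real s - real t\<bar> / lam - eps \<le> real (d (p s) (p t)) \<and>
        real (d (p s) (p t)) \<le> lam * \<bar>real s - real t\<bar> + eps)"

end

theory Submission
  imports Defs
begin


lemma word_eval_Nil[simp]: "word_eval G phi [] = \<one>\<^bsub>G\<^esub>"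
  by (simp add: word_eval_def)
lemma word_eval_Cons[simp]: "word_eval G phi (x # w) = phi x \<otimes>\<^bsub>G\<^esub> word_eval G phi w"
  by (simp add: word_eval_def)

context monoid begin
lemma word_eval_closed[simp]: "phi ` set w \<subseteq> carrier G \<Longrightarrow> word_eval G phi w \<in> carrier G"
  by (induction w) auto
lemma word_eval_append: "phi ` set w1 \<subseteq> carrier G \<Longrightarrow> phi ` set w2 \<subseteq> carrier G \<Longrightarrow>
   word_eval G phi (w1 @ w2) = word_eval G phi w1 \<otimes> word_eval G phi w2"
  by (induction w1) (auto simp: m_assoc)
end

lemma word_eval_map: "word_eval G f (map h w) = word_eval G (f \<circ> h) w"
  by (induction w) auto

lemma word_eval_hom:
  assumes "group E" "group G" "h \<in> hom E G" "phi ` set w \<subseteq> carrier E"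
  shows "h (word_eval E phi w) = word_eval G (h \<circ> phi) w"
  using assms(4)
proof (induction w)
  case Nil then show ?case using assms by (simp add: group_hom.hom_one group_hom_axioms_def group_hom_def)
next
  case (Cons x w)
  then show ?case using assms monoid.word_eval_closed[of E phi w] 
    by (simp add: hom_mult group.is_monoid)
qed

lemma (in group) word_eval_rev_inv:
  assumes "\<forall>x\<in>set w. phi (ix x) = inv (phi x)" "phi ` set w \<subseteq> carrier G"
  shows "word_eval G phi (rev (map ix w)) = inv (word_eval G phi w)"
  using assms
proof (induction w)
  case Nil then show ?case by simp
next
  case (Cons x w)
  have c: "phi ` set (rev (map ix w)) \<subseteq> carrier G" using Cons.prems by auto
  have "word_eval G phi (rev (map ix (x # w))) = word_eval G phi (rev (map ix w)) \<otimes> word_eval G phi [ix x]"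
    using word_eval_append[OF c, of "[ix x]"] Cons.prems by auto
  also have "\<dots> = inv (word_eval G phi w) \<otimes> inv (phi x)" using Cons by auto
  also have "\<dots> = inv (phi x \<otimes> word_eval G phi w)" using Cons.prems by (simp add: inv_mult_group)
  finally show ?case by simp
qed

lemma (in group) generate_words:
  assumes "A \<subseteq> carrier G" "\<forall>a\<in>A. inv a \<in> A" "x \<in> generate G A"
  shows "\<exists>ws. set ws \<subseteq> A \<and> word_eval G id ws = x"
  using assms(3)
proof (induction rule: generate.induct)
  case one then show ?case by (intro exI[of _ "[]"]) simp
next
  case (incl h) then show ?case using assms by (intro exI[of _ "[h]"]) auto
next
  case (inv h) then show ?case using assms by (intro exI[of _ "[inv h]"]) auto
next
  case (eng h1 h2)
  then obtain w1 w2 where "set w1 \<subseteq> A" "word_eval G id w1 = h1" "set w2 \<subseteq> A" "word_eval G id w2 = h2" by blast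
  moreover have "id ` set w1 \<subseteq> carrier G" "id ` set w2 \<subseteq> carrier G" using calculation assms(1) by auto
  ultimately show ?case using word_eval_append[of id w1 w2] by (metis Un_subset_iff set_append)
qed



locale gen_metric = group G for G :: "('g, 'c) monoid_scheme" (structure) +
  fixes S :: "'g set"
  assumes S_sub: "S \<subseteq> carrier G"
    and S_sym: "\<forall>s\<in>S. inv s \<in> S"
    and S_reach: "\<forall>g\<in>carrier G. \<exists>ws. set ws \<subseteq> S \<and> word_eval G id ws = g"
begin

abbreviation "d \<equiv> word_dist G S"

lemma dist_le:
  assumes "set ws \<subseteq> S" "word_eval G id ws = inv a \<otimes> b"
  shows "d a b \<le> length ws"
  unfolding word_dist_def by (rule Least_le) (use assms in blast)

lemma dist_ex:
  assumes "a \<in> carrier G" "b \<in> carrier G"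
  shows "\<exists>ws. set ws \<subseteq> S \<and> length ws = d a b \<and> word_eval G id ws = inv a \<otimes> b"
proof -
  obtain ws where "set ws \<subseteq> S" "word_eval G id ws = inv a \<otimes> b"
    using S_reach assms by (meson inv_closed m_closed)
  then have "\<exists>n ws. set ws \<subseteq> S \<and> length ws = n \<and> word_eval G id ws = inv a \<otimes> b" by blast
  from LeastI_ex[OF this] show ?thesis unfolding word_dist_def by blast
qed

lemma dist_sym1:
  assumes "a \<in> carrier G" "b \<in> carrier G"
  shows "d b a \<le> d a b"
proof -
  obtain ws where ws: "set ws \<subseteq> S" "length ws = d a b" "word_eval G id ws = inv a \<otimes> b"
    using dist_ex[OF assms] by blast
  have "\<forall>x\<in>set ws. id (inv x) = inv (id x)" by simp
  moreover have "id ` set ws \<subseteq> carrier G" using ws S_sub by auto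
  ultimately have "word_eval G id (rev (map (\<lambda>x. inv x) ws)) = inv (word_eval G id ws)"
    by (rule word_eval_rev_inv)
  also have "\<dots> = inv b \<otimes> a" using ws assms by (simp add: inv_mult_group)
  finally have "d b a \<le> length (rev (map (\<lambda>x. inv x) ws))"
    using ws S_sym by (intro dist_le) auto
  then show ?thesis using ws by simp
qed

lemma dist_sym: "a \<in> carrier G \<Longrightarrow> b \<in> carrier G \<Longrightarrow> d a b = d b a"
  using dist_sym1 by (meson le_antisym)

end



lemma take_rot_eq:
  assumes "L \<le> length xs + m"
  shows "take L (xs @ ys) = take L (xs @ take m ys)"
  using assms by (auto simp: take_append min_def)

lemma real_aux: "(m::real) - dl \<le> (k + k - e)/2 \<Longrightarrow> k/2 \<le> m \<Longrightarrow> e \<le> k + 2 * dl" 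
  by (simp add: field_simps)

locale hyp_metric = gen_metric +
  fixes \<delta> :: real
  assumes delta_nonneg: "\<delta> \<ge> 0"
    and hyp4: "\<forall>w\<in>carrier G. \<forall>x\<in>carrier G. \<forall>y\<in>carrier G. \<forall>z\<in>carrier G.
           gromov_product G S w x y \<ge>
             min (gromov_product G S w x z) (gromov_product G S w y z) - \<delta>"
begin

definition kk :: nat where "kk = nat \<lceil>2 * \<delta>\<rceil> + 1"

lemma kk_pos: "kk \<ge> 1" unfolding kk_def by simp

lemma kk_gt: "real kk > 2 * \<delta>"
  unfolding kk_def using delta_nonneg by linarith

lemma four_point:
  assumes x: "x \<in> carrier G" and y: "y \<in> carrier G" and z: "z \<in> carrier G" and ob: "ob \<in> carrier G"
    and yo: "d y ob \<le> d x ob" and zo: "d z ob \<le> d x ob"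
    and yx: "d y x = kk" and xz: "d x z = kk"
  shows "d y z < 2 * kk"
proof -
  have "gromov_product G S x y z \<ge> min (gromov_product G S x y ob) (gromov_product G S x z ob) - \<delta>"
    using hyp4 x y z ob by blast
  moreover have "d x y = kk" using yx dist_sym x y by simp
  ultimately have "(real kk + real kk - real (d y z)) / 2 \<ge>
     min ((real kk + real (d x ob) - real (d y ob)) / 2) ((real kk + real (d x ob) - real (d z ob)) / 2) - \<delta>"
    using xz unfolding gromov_product_def by simp
  moreover have "real (d y ob) \<le> real (d x ob)" "real (d z ob) \<le> real (d x ob)" using yo zo by auto
  moreover have "min ((real kk + real (d x ob) - real (d y ob)) / 2) ((real kk + real (d x ob) - real (d z ob)) / 2) \<ge> real kk / 2"
    using calculation(2,3) by simp
  ultimately have "real (d y z) \<le> real kk + 2 * \<delta>" using real_aux by blast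
  then show ?thesis using kk_gt by linarith
qed

lemma loop_shortcut:
  assumes l: "set l \<subseteq> S" and loop: "word_eval G id l = \<one>" and n: "length l = n" "n \<ge> 1"
  shows "\<exists>a<n. \<exists>L u. 1 \<le> L \<and> L \<le> 2 * kk \<and> L \<le> n \<and> set u \<subseteq> S \<and> length u < L \<and>
           word_eval G id u = word_eval G id (take L (drop a l @ take a l))"
proof (cases "n \<le> 2 * kk")
  case True
  show ?thesis
    by (rule exI[of _ 0]) (use n True loop in \<open>intro conjI exI[of _ n] exI[of _ "[]"], auto\<close>)
next
  case False
  define ll where "ll = l @ l"
  define P where "P j = word_eval G id (take j ll)" for j
  have llS: "set ll \<subseteq> S" using l unfolding ll_def by auto
  have Pc: "P j \<in> carrier G" for j
    unfolding P_def using llS S_sub set_take_subset by (intro word_eval_closed) fastforce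
  have Psub: "inv (P a) \<otimes> P b = word_eval G id (take (b - a) (drop a ll))" if "a \<le> b" for a b
  proof -
    have t: "take b ll = take a ll @ take (b - a) (drop a ll)"
      using take_add[of a "b - a" ll] that by simp
    have c1: "id ` set (take a ll) \<subseteq> carrier G" using llS S_sub set_take_subset by fastforce
    have c2: "id ` set (take (b - a) (drop a ll)) \<subseteq> carrier G"
      using llS S_sub set_take_subset set_drop_subset by fastforce
    have "P b = P a \<otimes> word_eval G id (take (b - a) (drop a ll))"
      unfolding P_def t by (rule word_eval_append[OF c1 c2])
    moreover have "word_eval G id (take (b - a) (drop a ll)) \<in> carrier G" using c2 by simp
    ultimately show ?thesis using Pc by (simp add: m_assoc[symmetric])
  qed
  have Pd: "d (P a) (P b) \<le> b - a" if "a \<le> b" for a b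
  proof -
    have "d (P a) (P b) \<le> length (take (b - a) (drop a ll))"
      using Psub[OF that] llS set_take_subset set_drop_subset
      by (intro dist_le) (fastforce+)
    then show ?thesis by simp
  qed
  have Pl: "P j = word_eval G id (take j l)" if "j \<le> n" for j
    using that n unfolding P_def ll_def by simp
  have Ph: "P (j + n) = P j" if "j \<le> n" for j
  proof -
    have c1: "id ` set l \<subseteq> carrier G" using l S_sub by auto
    have c2: "id ` set (take j l) \<subseteq> carrier G" using l S_sub set_take_subset by fastforce
    have "take (j + n) ll = l @ take j l" unfolding ll_def using n by simp
    then have "P (j + n) = word_eval G id l \<otimes> word_eval G id (take j l)"
      unfolding P_def using word_eval_append[OF c1 c2] by simp
    then show ?thesis using loop Pl[OF that] Pc[of j] by simp
  qed
  have Pn: "P n = P 0" using Pl[of n] Pl[of 0] n loop by simp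
  have Pmod: "\<exists>j'<n. P j = P j'" if jle: "j \<le> 2 * n" for j
  proof -
    consider "j < n" | "j = n" | "n < j" "j < 2 * n" | "j = 2 * n" using jle by (metis le_eq_less_or_eq linorder_neqE_nat)
    then show ?thesis
    proof cases
      case 1 then show ?thesis by blast
    next
      case 2 then show ?thesis using Pn n by (intro exI[of _ 0]) auto
    next
      case 3 then show ?thesis using Ph[of "j - n"] by (intro exI[of _ "j - n"]) auto
    next
      case 4 then show ?thesis using Ph[of n] Pn n by (intro exI[of _ 0]) (auto simp: mult_2)
    qed
  qed
  define f where "f j = d (P j) \<one>" for j
  obtain i0 where i0: "i0 < n" "\<forall>j<n. f j \<le> f i0"
  proof -
    have "finite (f ` {..<n})" "f ` {..<n} \<noteq> {}" using n by (auto simp: lessThan_empty_iff)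
    then have "Max (f ` {..<n}) \<in> f ` {..<n}" by (rule Max_in)
    then obtain i where "i < n" "f i = Max (f ` {..<n})" by auto
    moreover have "\<forall>j<n. f j \<le> Max (f ` {..<n})" by auto
    ultimately show ?thesis using that by auto
  qed
  have fmax: "f j \<le> f i0" if "j \<le> 2 * n" for j
    using Pmod[OF that] i0 unfolding f_def by auto
  define i where "i = (if kk \<le> i0 then i0 else i0 + n)"
  have i1: "kk \<le> i" "i + kk \<le> 2 * n" using False i0 unfolding i_def by auto
  have Pi: "P i = P i0" unfolding i_def using Ph[of i0] i0 by auto
  have main: "\<exists>a L. a + L \<le> 2 * n \<and> 1 \<le> L \<and> L \<le> 2 * kk \<and> d (P a) (P (a + L)) < L"
  proof (cases "d (P (i - kk)) (P i) < kk")
    case True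
    then show ?thesis using i1 kk_pos by (intro exI[of _ "i - kk", OF exI[of _ kk]]) auto
  next
    case F1: False
    show ?thesis
    proof (cases "d (P i) (P (i + kk)) < kk")
      case True
      then show ?thesis using i1 kk_pos by (intro exI[of _ "i", OF exI[of _ kk]]) auto
    next
      case F2: False
      have e1: "d (P (i - kk)) (P i) = kk" using F1 Pd[of "i - kk" i] i1 by auto
      have e2: "d (P i) (P (i + kk)) = kk" using F2 Pd[of i "i + kk"] by auto
      have "d (P (i - kk)) (P (i + kk)) < 2 * kk"
      proof (rule four_point[OF Pc Pc Pc one_closed _ _ e1 e2])
        show "d (P (i - kk)) \<one> \<le> d (P i) \<one>" using fmax[of "i - kk"] fmax[of i] Pi i1 unfolding f_def by auto
        show "d (P (i + kk)) \<one> \<le> d (P i) \<one>" using fmax[of "i + kk"] Pi i1 unfolding f_def by auto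
      qed
      moreover have "i - kk + 2 * kk = i + kk" using i1 by simp
      ultimately show ?thesis using i1 kk_pos by (intro exI[of _ "i - kk", OF exI[of _ "2 * kk"]]) (auto simp: add.commute)
    qed
  qed
  then obtain a L where aL: "a + L \<le> 2 * n" "1 \<le> L" "L \<le> 2 * kk" "d (P a) (P (a + L)) < L" by blast
  obtain u where u: "set u \<subseteq> S" "length u = d (P a) (P (a + L))"
    "word_eval G id u = inv (P a) \<otimes> P (a + L)"
    using dist_ex[OF Pc Pc] by blast
  have ueq: "word_eval G id u = word_eval G id (take L (drop a ll))"
    using u(3) Psub[of a "a + L"] by simp
  have Ln: "L \<le> n" using aL False by linarith
  show ?thesis
  proof (cases "a < n")
    case True
    have "take L (drop a ll) = take L (drop a l @ take a l)"
      unfolding ll_def using True Ln n by (simp add: take_rot_eq)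
    then have "a < n \<and> 1 \<le> L \<and> L \<le> 2 * kk \<and> L \<le> n \<and> set u \<subseteq> S \<and> length u < L \<and>
           word_eval G id u = word_eval G id (take L (drop a l @ take a l))"
      using True aL u ueq Ln by auto
    then show ?thesis by blast
  next
    case False
    have e1: "drop a ll = drop (a - n) l" unfolding ll_def using False n by simp
    have e2: "take L (drop (a - n) l) = take L (drop (a - n) l @ take (a - n) l)"
      using aL n False by simp
    have "word_eval G id u = word_eval G id (take L (drop (a - n) l @ take (a - n) l))"
      using ueq e1 e2 by metis
    then have "a - n < n \<and> 1 \<le> L \<and> L \<le> 2 * kk \<and> L \<le> n \<and> set u \<subseteq> S \<and> length u < L \<and>
           word_eval G id u = word_eval G id (take L (drop (a - n) l @ take (a - n) l))"
      using False aL u Ln by auto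
    then show ?thesis by blast
  qed
qed

end


lemma word_eval_cong: "(\<And>x. x \<in> set w \<Longrightarrow> f x = g x) \<Longrightarrow> word_eval G f w = word_eval G g w"
  by (induction w) auto

lemma (in group) rot_central:
  assumes "x \<in> carrier G" "y \<in> carrier G" "x \<otimes> y = c" "c \<otimes> x = x \<otimes> c"
  shows "y \<otimes> x = c"
proof -
  have c: "c \<in> carrier G" using assms by auto
  have "y = inv x \<otimes> c" using assms by (metis inv_solve_left m_closed)
  then have "y \<otimes> x = inv x \<otimes> (c \<otimes> x)" using assms c by (simp add: m_assoc)
  also have "\<dots> = c" using assms c by (simp add: m_assoc[symmetric])
  finally show ?thesis .
qed

locale cext =
  fixes G :: "('g, 'c) monoid_scheme" and E :: "('e, 'b) monoid_scheme" (structure)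
    and iota :: "int \<Rightarrow> 'e" and pr :: "'e \<Rightarrow> 'g"
  assumes ext: "central_extension iota E pr G"
begin

lemma grpE: "group E" and grpG: "group G" using ext unfolding central_extension_def by auto

sublocale group E by (rule grpE)

lemma iota_hom: "iota \<in> hom integer_group E" using ext unfolding central_extension_def by auto
lemma pr_hom: "pr \<in> hom E G" using ext unfolding central_extension_def by auto
lemma iota_inj: "iota a = iota b \<Longrightarrow> a = b" using ext unfolding central_extension_def inj_def by auto
lemma iota_closed[simp]: "iota n \<in> carrier E" using iota_hom unfolding hom_def by auto
lemma iota_add: "iota (a + b) = iota a \<otimes> iota b"
  using iota_hom unfolding hom_def integer_group_def by auto
lemma iota_zero: "iota 0 = \<one>"
proof -
  have "iota 0 \<otimes> iota 0 = iota 0 \<otimes> \<one>" using iota_add[of 0 0] by simp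
  then show ?thesis by (meson iota_closed l_cancel one_closed)
qed
lemma iota_neg: "inv (iota a) = iota (- a)"
proof -
  have "iota (-a) \<otimes> iota a = \<one>" using iota_add[of "-a" a] iota_zero by simp
  then show ?thesis by (intro inv_equality) auto
qed
lemma iota_central: "e \<in> carrier E \<Longrightarrow> iota n \<otimes> e = e \<otimes> iota n"
  using ext unfolding central_extension_def by auto
lemma pr_closed: "e \<in> carrier E \<Longrightarrow> pr e \<in> carrier G" using pr_hom unfolding hom_def by auto
lemma pr_mult: "a \<in> carrier E \<Longrightarrow> b \<in> carrier E \<Longrightarrow> pr (a \<otimes> b) = pr a \<otimes>\<^bsub>G\<^esub> pr b"
  using pr_hom unfolding hom_def by auto
lemma pr_gh: "group_hom E G pr" using grpE grpG pr_hom by (simp add: group_hom_axioms_def group_hom_def)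
lemma pr_inv: "a \<in> carrier E \<Longrightarrow> pr (inv a) = inv\<^bsub>G\<^esub> pr a"
  using group_hom.hom_inv[OF pr_gh] by simp
lemma pr_one: "pr \<one> = \<one>\<^bsub>G\<^esub>" using group_hom.hom_one[OF pr_gh] by simp
lemma pr_surj: "pr ` carrier E = carrier G" using ext unfolding central_extension_def by auto
lemma kernel_iota: "x \<in> carrier E \<Longrightarrow> pr x = \<one>\<^bsub>G\<^esub> \<Longrightarrow> \<exists>h. x = iota h"
  using ext unfolding central_extension_def kernel_def by auto
lemma pr_iota: "pr (iota n) = \<one>\<^bsub>G\<^esub>"
  using ext unfolding central_extension_def kernel_def by (metis (mono_tags, lifting) mem_Collect_eq rangeI)

lemma iota_diff: "iota a \<otimes> inv (iota b) = iota (a - b)"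
  using iota_add[of a "-b"] iota_neg by simp

end



locale hyp_ext = cext +
  fixes S and \<delta> :: real and \<sigma>
  assumes hm: "hyp_metric G S \<delta>" and finS: "finite S"
    and sc: "\<forall>s\<in>S. \<sigma> s \<in> carrier E" and spr: "\<forall>s\<in>S. pr (\<sigma> s) = s"
begin

lemma gm: "gen_metric G S" using hm unfolding hyp_metric_def by auto

lemma S_sub: "S \<subseteq> carrier G" using gm unfolding gen_metric_def gen_metric_axioms_def by auto

lemma evS_closed: "set w \<subseteq> S \<Longrightarrow> word_eval E \<sigma> w \<in> carrier E"
  using sc by (intro word_eval_closed) auto

lemma evG_closed: "set w \<subseteq> S \<Longrightarrow> word_eval G id w \<in> carrier G"
  using S_sub monoid.word_eval_closed[of G id w] grpG group.is_monoid by fastforce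

lemma pr_eval: "set w \<subseteq> S \<Longrightarrow> pr (word_eval E \<sigma> w) = word_eval G id w"
proof -
  assume w: "set w \<subseteq> S"
  then have "pr (word_eval E \<sigma> w) = word_eval G (pr \<circ> \<sigma>) w"
    using sc by (intro word_eval_hom[OF grpE grpG pr_hom]) auto
  also have "\<dots> = word_eval G id w" using w spr by (intro word_eval_cong) auto
  finally show ?thesis .
qed

lemma evG_append: "set a \<subseteq> S \<Longrightarrow> set b \<subseteq> S \<Longrightarrow> word_eval G id (a @ b) = word_eval G id a \<otimes>\<^bsub>G\<^esub> word_eval G id b"
  using S_sub monoid.word_eval_append[of G id a b] grpG group.is_monoid by fastforce

lemma evE_append: "set a \<subseteq> S \<Longrightarrow> set b \<subseteq> S \<Longrightarrow> word_eval E \<sigma> (a @ b) = word_eval E \<sigma> a \<otimes> word_eval E \<sigma> b"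
  using sc by (intro word_eval_append) auto

definition Pairs where "Pairs = {(v, u). set v \<subseteq> S \<and> length v \<le> 2 * hyp_metric.kk \<delta> \<and>
   set u \<subseteq> S \<and> length u \<le> 2 * hyp_metric.kk \<delta> \<and> word_eval G id v = word_eval G id u}"

lemma Pairs_bound: "\<exists>M0::int. M0 \<ge> 0 \<and> (\<forall>(v, u)\<in>Pairs. \<forall>j. iota j = word_eval E \<sigma> v \<otimes> inv (word_eval E \<sigma> u) \<longrightarrow> j \<le> M0)"
proof -
  define F where "F = (\<lambda>p. inv_into UNIV iota (word_eval E \<sigma> (fst p) \<otimes> inv (word_eval E \<sigma> (snd p))))"
  define J where "J = F ` Pairs"
  have fin: "finite Pairs"
  proof -
    have "Pairs \<subseteq> {xs. set xs \<subseteq> S \<and> length xs \<le> 2 * hyp_metric.kk \<delta>} \<times> {xs. set xs \<subseteq> S \<and> length xs \<le> 2 * hyp_metric.kk \<delta>}"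
      unfolding Pairs_def by auto
    then show ?thesis using finite_lists_length_le[OF finS] by (meson finite_SigmaI finite_subset)
  qed
  then have "finite J" unfolding J_def by simp
  define M0 where "M0 = Max (insert 0 J)"
  have inj: "inj iota" using iota_inj by (meson injI)
  have "j \<le> M0" if "(v, u) \<in> Pairs" "iota j = word_eval E \<sigma> v \<otimes> inv (word_eval E \<sigma> u)" for v u j
  proof -
    have "F (v, u) = j" unfolding F_def using that(2) inv_into_f_f[OF inj] by (metis fst_conv snd_conv UNIV_I)
    then have "j \<in> J" unfolding J_def using that(1) by force
    then show ?thesis unfolding M0_def using \<open>finite J\<close> by simp
  qed
  moreover have "M0 \<ge> 0" unfolding M0_def using \<open>finite J\<close> by simp
  ultimately show ?thesis by blast
qed

lemma S_height: "\<exists>M::int. M \<ge> 0 \<and> (\<forall>l. set l \<subseteq> S \<and> word_eval G id l = \<one>\<^bsub>G\<^esub> \<longrightarrow>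
    (\<exists>h. word_eval E \<sigma> l = iota h \<and> h \<le> M * int (length l)))"
proof -
  obtain M where M: "M \<ge> 0" "\<forall>(v, u)\<in>Pairs. \<forall>j. iota j = word_eval E \<sigma> v \<otimes> inv (word_eval E \<sigma> u) \<longrightarrow> j \<le> M"
    using Pairs_bound by blast
  have "\<exists>h. word_eval E \<sigma> l = iota h \<and> h \<le> M * int (length l)"
    if "set l \<subseteq> S" "word_eval G id l = \<one>\<^bsub>G\<^esub>" for l
    using that
  proof (induction "length l" arbitrary: l rule: less_induct)
    case less
    show ?case
    proof (cases "length l = 0")
      case True then show ?thesis using iota_zero by (intro exI[of _ 0]) auto
    next
      case False
      define n where "n = length l"
      obtain a L u where aL: "a < n" "1 \<le> L" "L \<le> 2 * hyp_metric.kk \<delta>" "L \<le> n" "set u \<subseteq> S" "length u < L"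
        "word_eval G id u = word_eval G id (take L (drop a l @ take a l))"
        using hyp_metric.loop_shortcut[OF hm less.prems(1) less.prems(2), of n] False n_def by auto
      define rot where "rot = drop a l @ take a l"
      define v where "v = take L rot"
      define c where "c = drop L rot"
      have rotS: "set rot \<subseteq> S" unfolding rot_def using less.prems set_take_subset set_drop_subset by fastforce
      have vS: "set v \<subseteq> S" "set c \<subseteq> S" unfolding v_def c_def using rotS set_take_subset set_drop_subset by fastforce+
      have rv: "rot = v @ c" unfolding v_def c_def by simp
      have lenrot: "length rot = n" unfolding rot_def n_def using aL by simp
      have l_split: "l = take a l @ drop a l" by simp
      have tS: "set (take a l) \<subseteq> S" "set (drop a l) \<subseteq> S" using less.prems set_take_subset set_drop_subset by fastforce+
      have rotG: "word_eval G id rot = \<one>\<^bsub>G\<^esub>"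
      proof -
        have "word_eval G id (take a l) \<otimes>\<^bsub>G\<^esub> word_eval G id (drop a l) = \<one>\<^bsub>G\<^esub>"
          using less.prems(2) evG_append[OF tS] l_split by metis
        then show ?thesis unfolding rot_def using evG_append[OF tS(2) tS(1)] evG_closed[OF tS(1)] evG_closed[OF tS(2)]
          group.rot_central[OF grpG] by (metis group.is_monoid grpG monoid.l_one monoid.r_one)
      qed
      define l' where "l' = u @ c"
      have l'S: "set l' \<subseteq> S" unfolding l'_def using aL vS by auto
      have l'len: "length l' < length l" unfolding l'_def c_def using aL lenrot n_def by auto
      have uv: "word_eval G id u = word_eval G id v" using aL(7) unfolding v_def rot_def .
      have l'G: "word_eval G id l' = \<one>\<^bsub>G\<^esub>"
      proof -
        have "word_eval G id l' = word_eval G id u \<otimes>\<^bsub>G\<^esub> word_eval G id c"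
          unfolding l'_def by (rule evG_append[OF aL(5) vS(2)])
        also have "\<dots> = word_eval G id rot" unfolding uv rv by (rule evG_append[OF vS, symmetric])
        finally show ?thesis using rotG by simp
      qed
      obtain h' where h': "word_eval E \<sigma> l' = iota h'" "h' \<le> M * int (length l')"
        using less.hyps[OF l'len l'S l'G] by blast
      obtain hl where hl: "word_eval E \<sigma> l = iota hl"
        using kernel_iota[OF evS_closed[OF less.prems(1)]] pr_eval[OF less.prems(1)] less.prems(2) by metis
      have rotE: "word_eval E \<sigma> rot = iota hl"
      proof -
        have "word_eval E \<sigma> (take a l) \<otimes> word_eval E \<sigma> (drop a l) = iota hl"
          using hl evE_append[OF tS] l_split by metis
        then show ?thesis unfolding rot_def using evE_append[OF tS(2) tS(1)] evS_closed[OF tS(1)] evS_closed[OF tS(2)]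
          rot_central iota_central by metis
      qed
      define V where "V = word_eval E \<sigma> v"
      define U where "U = word_eval E \<sigma> u"
      define Cc where "Cc = word_eval E \<sigma> c"
      have VUC: "V \<in> carrier E" "U \<in> carrier E" "Cc \<in> carrier E"
        unfolding V_def U_def Cc_def using evS_closed vS aL by auto
      have "pr (V \<otimes> inv U) = \<one>\<^bsub>G\<^esub>"
        using pr_mult pr_inv VUC pr_eval vS aL unfolding V_def U_def v_def
        by (metis aL(7) evG_closed group.r_inv grpG inv_closed rot_def)
      then obtain j where j: "V \<otimes> inv U = iota j" using kernel_iota VUC by (metis inv_closed m_closed)
      have "(v, u) \<in> Pairs" unfolding Pairs_def using vS aL v_def lenrot by (auto simp: rot_def)
      then have jM: "j \<le> M" using M(2) j unfolding V_def U_def by auto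
      have "V = iota j \<otimes> U" using j VUC by (metis inv_solve_right iota_closed)
      then have "iota hl = iota j \<otimes> U \<otimes> Cc" using rotE evE_append[OF vS] rv V_def Cc_def by simp
      also have "\<dots> = iota j \<otimes> iota h'" using h' evE_append[OF aL(5) vS(2)] VUC unfolding l'_def U_def Cc_def
        by (simp add: m_assoc)
      also have "\<dots> = iota (j + h')" by (simp add: iota_add)
      finally have "hl = j + h'" by (rule iota_inj)
      moreover have "M * int (length l') \<le> M * (int (length l) - 1)" using l'len M(1)
        by (intro mult_left_mono) auto
      ultimately have "hl \<le> M * int (length l)" using jM h'(2) by (simp add: algebra_simps)
      then show ?thesis using hl by blast
    qed
  qed
  then show ?thesis using M(1) by blast
qed

end


locale xset = cext +
  fixes Xg and phi
  assumes hypG: "hyperbolic_group G" and finX: "finite Xg"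
    and phiX: "phi ` Xg \<subseteq> carrier E"
    and symm: "\<forall>x\<in>Xg. inv (phi x) \<in> phi ` Xg"
    and gen: "generate E (phi ` Xg) = carrier E"
begin

lemma evX_closed: "set w \<subseteq> Xg \<Longrightarrow> word_eval E phi w \<in> carrier E"
  using phiX by (intro word_eval_closed) auto

lemma evX_append: "set a \<subseteq> Xg \<Longrightarrow> set b \<subseteq> Xg \<Longrightarrow> word_eval E phi (a @ b) = word_eval E phi a \<otimes> word_eval E phi b"
  using phiX by (intro word_eval_append) auto

lemma X_reach: "e \<in> carrier E \<Longrightarrow> \<exists>w. set w \<subseteq> Xg \<and> word_eval E phi w = e"
proof -
  assume e: "e \<in> carrier E"
  have sy: "\<forall>a\<in>phi ` Xg. inv a \<in> phi ` Xg" using symm by blast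
  have "e \<in> generate E (phi ` Xg)" using gen e by simp
  then obtain ws where ws: "set ws \<subseteq> phi ` Xg" "word_eval E id ws = e"
    using generate_words[OF phiX sy] by blast
  define w where "w = map (inv_into Xg phi) ws"
  have mw: "map phi w = ws" unfolding w_def map_map
  proof (rule map_idI)
    fix x assume "x \<in> set ws"
    then have "x \<in> phi ` Xg" using ws(1) by blast
    then show "(phi \<circ> inv_into Xg phi) x = x" by (simp add: f_inv_into_f)
  qed
  have sw: "set w \<subseteq> Xg"
  proof
    fix y assume "y \<in> set w"
    then obtain x where x: "x \<in> set ws" "y = inv_into Xg phi x" unfolding w_def by auto
    then have "x \<in> phi ` Xg" using ws(1) by blast
    then show "y \<in> Xg" using x(2) by (simp add: inv_into_into)
  qed
  have "word_eval E phi w = e" using ws(2) word_eval_map[of E id phi w] mw by (metis id_comp)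
  then show ?thesis using sw by blast
qed

lemma X_inv: "\<exists>ix. \<forall>x\<in>Xg. ix x \<in> Xg \<and> phi (ix x) = inv (phi x)"
proof -
  have "\<forall>x\<in>Xg. \<exists>y. y \<in> Xg \<and> phi y = inv (phi x)"
  proof
    fix x assume "x \<in> Xg"
    then have "inv (phi x) \<in> phi ` Xg" using symm by blast
    then obtain y where "y \<in> Xg" "inv (phi x) = phi y" by (rule imageE)
    then show "\<exists>y. y \<in> Xg \<and> phi y = inv (phi x)" by auto
  qed
  then show ?thesis by (rule bchoice)
qed

lemma X_height: "\<exists>K::int. K \<ge> 0 \<and> (\<forall>l. set l \<subseteq> Xg \<and> pr (word_eval E phi l) = \<one>\<^bsub>G\<^esub> \<longrightarrow>
    (\<exists>h. word_eval E phi l = iota h \<and> h \<le> K * int (length l)))"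
proof -
  obtain S \<delta> where Sd: "finite S" "S \<subseteq> carrier G" "\<forall>s\<in>S. inv\<^bsub>G\<^esub> s \<in> S"
        "generate G S = carrier G" "\<delta> \<ge> 0"
        "\<forall>w\<in>carrier G. \<forall>x\<in>carrier G. \<forall>y\<in>carrier G. \<forall>z\<in>carrier G.
           gromov_product G S w x y \<ge> min (gromov_product G S w x z) (gromov_product G S w y z) - \<delta>"
    using hypG unfolding hyperbolic_group_def
    apply (elim conjE exE)
    apply (rule that)
         apply assumption+
    done
  have reach: "\<forall>g\<in>carrier G. \<exists>ws. set ws \<subseteq> S \<and> word_eval G id ws = g"
  proof
    fix g assume "g \<in> carrier G"
    then have "g \<in> generate G S" using Sd(4) by simp
    then show "\<exists>ws. set ws \<subseteq> S \<and> word_eval G id ws = g" by (rule group.generate_words[OF grpG Sd(2) Sd(3)])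
  qed
  have gm: "gen_metric G S"
    by (rule gen_metric.intro[OF grpG]) (unfold gen_metric_axioms_def, use Sd reach in blast)
  have hm: "hyp_metric G S \<delta>"
    by (rule hyp_metric.intro[OF gm]) (unfold hyp_metric_axioms_def, use Sd in blast)
  have "\<forall>s\<in>S. \<exists>e. e \<in> carrier E \<and> pr e = s"
  proof
    fix s assume "s \<in> S"
    then have "s \<in> pr ` carrier E" using pr_surj Sd(2) by auto
    then show "\<exists>e. e \<in> carrier E \<and> pr e = s" by auto
  qed
  then have "\<exists>\<sigma>. \<forall>s\<in>S. \<sigma> s \<in> carrier E \<and> pr (\<sigma> s) = s" by (rule bchoice)
  then obtain \<sigma> where sg: "\<forall>s\<in>S. \<sigma> s \<in> carrier E \<and> pr (\<sigma> s) = s" by blast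
  have hea: "hyp_ext_axioms G E pr S \<delta> \<sigma>"
    unfolding hyp_ext_axioms_def using hm Sd(1) sg by blast
  interpret he: hyp_ext G E iota pr S \<delta> \<sigma>
    by (rule hyp_ext.intro[OF cext_axioms hea])
  obtain M where M: "M \<ge> 0" "\<forall>l. set l \<subseteq> S \<and> word_eval G id l = \<one>\<^bsub>G\<^esub> \<longrightarrow>
    (\<exists>h. word_eval E \<sigma> l = iota h \<and> h \<le> M * int (length l))" using he.S_height by blast
  have "\<forall>x\<in>Xg. \<exists>ws. set ws \<subseteq> S \<and> word_eval G id ws = pr (phi x)"
  proof
    fix x assume "x \<in> Xg"
    then have "pr (phi x) \<in> carrier G" using phiX pr_closed by auto
    then show "\<exists>ws. set ws \<subseteq> S \<and> word_eval G id ws = pr (phi x)" using reach by blast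
  qed
  then have "\<exists>r. \<forall>x\<in>Xg. set (r x) \<subseteq> S \<and> word_eval G id (r x) = pr (phi x)" by (rule bchoice)
  then obtain r where r: "\<forall>x\<in>Xg. set (r x) \<subseteq> S \<and> word_eval G id (r x) = pr (phi x)" by blast
  have "\<forall>x\<in>Xg. \<exists>c. word_eval E \<sigma> (r x) = phi x \<otimes> iota c"
  proof
    fix x assume x: "x \<in> Xg"
    have px: "phi x \<in> carrier E" using x phiX by auto
    have rx: "word_eval E \<sigma> (r x) \<in> carrier E" using he.evS_closed r x by auto
    have "pr (inv (phi x) \<otimes> word_eval E \<sigma> (r x)) = pr (inv (phi x)) \<otimes>\<^bsub>G\<^esub> pr (word_eval E \<sigma> (r x))"
      by (rule pr_mult[OF inv_closed[OF px] rx])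
    also have "\<dots> = inv\<^bsub>G\<^esub> (pr (phi x)) \<otimes>\<^bsub>G\<^esub> pr (phi x)"
      using pr_inv[OF px] he.pr_eval r x by simp
    also have "\<dots> = \<one>\<^bsub>G\<^esub>" by (rule group.l_inv[OF grpG pr_closed[OF px]])
    finally have "pr (inv (phi x) \<otimes> word_eval E \<sigma> (r x)) = \<one>\<^bsub>G\<^esub>" .
    moreover have "inv (phi x) \<otimes> word_eval E \<sigma> (r x) \<in> carrier E" using px rx by simp
    ultimately obtain c where "inv (phi x) \<otimes> word_eval E \<sigma> (r x) = iota c"
      using kernel_iota by blast
    then have "word_eval E \<sigma> (r x) = phi x \<otimes> iota c" using inv_solve_left'[OF iota_closed px rx] by blast
    then show "\<exists>c. word_eval E \<sigma> (r x) = phi x \<otimes> iota c" by blast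
  qed
  then have "\<exists>cf. \<forall>x\<in>Xg. word_eval E \<sigma> (r x) = phi x \<otimes> iota (cf x)" by (rule bchoice)
  then obtain cf where cf: "\<forall>x\<in>Xg. word_eval E \<sigma> (r x) = phi x \<otimes> iota (cf x)" by blast
  define Rm where "Rm = Max (insert 0 ((\<lambda>x. length (r x)) ` Xg))"
  define Cm where "Cm = Max (insert 0 ((\<lambda>x. \<bar>cf x\<bar>) ` Xg))"
  have Rm: "x \<in> Xg \<Longrightarrow> length (r x) \<le> Rm" for x unfolding Rm_def using finX by simp
  have Cm: "x \<in> Xg \<Longrightarrow> \<bar>cf x\<bar> \<le> Cm" for x unfolding Cm_def using finX by simp
  have Cm0: "Cm \<ge> 0" unfolding Cm_def using finX by simp
  have conv: "set (concat (map r l)) \<subseteq> S \<and>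
      word_eval E \<sigma> (concat (map r l)) = word_eval E phi l \<otimes> iota (sum_list (map cf l)) \<and>
      length (concat (map r l)) \<le> Rm * length l \<and> - sum_list (map cf l) \<le> Cm * int (length l)"
    if "set l \<subseteq> Xg" for l
    using that
  proof (induction l)
    case Nil then show ?case using iota_zero by simp
  next
    case (Cons x l)
    have x: "x \<in> Xg" "set l \<subseteq> Xg" using Cons.prems by auto
    note IH = Cons.IH[OF x(2)]
    have px: "phi x \<in> carrier E" using x phiX by auto
    have pl: "word_eval E phi l \<in> carrier E" using evX_closed x by auto
    have "word_eval E \<sigma> (concat (map r (x # l))) = word_eval E \<sigma> (r x) \<otimes> word_eval E \<sigma> (concat (map r l))"
      using he.evE_append r x IH by simp
    also have "\<dots> = (phi x \<otimes> iota (cf x)) \<otimes> (word_eval E phi l \<otimes> iota (sum_list (map cf l)))"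
      using cf x IH by simp
    also have "\<dots> = phi x \<otimes> (iota (cf x) \<otimes> word_eval E phi l) \<otimes> iota (sum_list (map cf l))"
      using px pl by (simp add: m_assoc)
    also have "\<dots> = phi x \<otimes> (word_eval E phi l \<otimes> iota (cf x)) \<otimes> iota (sum_list (map cf l))"
      by (simp only: iota_central[OF pl])
    also have "\<dots> = (phi x \<otimes> word_eval E phi l) \<otimes> iota (cf x + sum_list (map cf l))"
      using px pl by (simp add: m_assoc iota_add)
    finally have e: "word_eval E \<sigma> (concat (map r (x # l))) = word_eval E phi (x # l) \<otimes> iota (sum_list (map cf (x # l)))"
      by simp
    have "length (concat (map r (x # l))) \<le> Rm * length (x # l)" using IH Rm[OF x(1)] by simp
    moreover have "- sum_list (map cf (x # l)) \<le> Cm * int (length (x # l))"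
    proof -
      have a: "- cf x \<le> Cm" using Cm[OF x(1)] by linarith
      have b: "- sum_list (map cf l) \<le> Cm * int (length l)" using IH by blast
      show ?thesis using a b by (simp add: algebra_simps)
    qed
    ultimately show ?case using e IH r x by auto
  qed
  have "\<exists>h. word_eval E phi l = iota h \<and> h \<le> (M * int Rm + Cm) * int (length l)"
    if l: "set l \<subseteq> Xg" "pr (word_eval E phi l) = \<one>\<^bsub>G\<^esub>" for l
  proof -
    define w' where "w' = concat (map r l)"
    define s where "s = sum_list (map cf l)"
    note cv = conv[OF l(1), folded w'_def s_def]
    have pl: "word_eval E phi l \<in> carrier E" using evX_closed l by auto
    have "word_eval G id w' = pr (word_eval E \<sigma> w')" using he.pr_eval[symmetric] cv by blast
    also have "\<dots> = \<one>\<^bsub>G\<^esub>" using cv pr_mult[OF pl iota_closed] l pr_iota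
      by (simp add: group.is_monoid[OF grpG] monoid.l_one[OF group.is_monoid[OF grpG]])
    finally obtain h where h: "word_eval E \<sigma> w' = iota h" "h \<le> M * int (length w')" using M cv by blast
    have "word_eval E phi l = iota h \<otimes> inv (iota s)" using h cv
      inv_solve_right[OF pl iota_closed iota_closed, of h s] by simp
    then have e: "word_eval E phi l = iota (h - s)" by (simp add: iota_diff)
    have "M * int (length w') \<le> M * (int Rm * int (length l))"
      using cv M(1) by (intro mult_left_mono) (auto simp flip: of_nat_mult)
    then have "h - s \<le> (M * int Rm + Cm) * int (length l)" using h cv by (simp add: algebra_simps)
    then show ?thesis using e by blast
  qed
  moreover have "M * int Rm + Cm \<ge> 0" using M Cm0 by simp
  ultimately show ?thesis by blast
qed

end


lemma int_set_has_max:
  fixes XX :: "int set"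
  assumes "x0 \<in> XX" "\<forall>x\<in>XX. x \<le> B"
  shows "\<exists>m\<in>XX. \<forall>x\<in>XX. x \<le> m"
proof -
  have fin: "finite (XX \<inter> {x0..B})" by simp
  have ne: "x0 \<in> XX \<inter> {x0..B}" using assms by auto
  define m where "m = Max (XX \<inter> {x0..B})"
  have "m \<in> XX \<inter> {x0..B}" unfolding m_def using fin ne by (intro Max_in) auto
  moreover have "x \<le> m" if "x \<in> XX" for x
  proof (cases "x \<ge> x0")
    case True
    then have "x \<in> XX \<inter> {x0..B}" using that assms by auto
    then show ?thesis unfolding m_def using fin by simp
  next
    case False
    moreover have "x0 \<le> m" unfolding m_def using fin ne by simp
    ultimately show ?thesis by simp
  qed
  ultimately show ?thesis by blast
qed

context cext begin

lemma iota_conj1: "W \<in> carrier E \<Longrightarrow> (iota a \<otimes> W) \<otimes> inv (iota b \<otimes> W) = iota (a - b)"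
proof -
  assume W: "W \<in> carrier E"
  have "(iota a \<otimes> W) \<otimes> inv (iota b \<otimes> W) = iota a \<otimes> (W \<otimes> inv W) \<otimes> inv (iota b)"
  proof -
    have "W \<otimes> (inv W \<otimes> inv (iota b)) = inv (iota b)" using W by (simp add: m_assoc[symmetric])
    then show ?thesis using W by (simp add: inv_mult_group m_assoc)
  qed
  also have "\<dots> = iota (a - b)" using W by (simp add: iota_diff)
  finally show ?thesis .
qed

lemma iota_conj2: "W \<in> carrier E \<Longrightarrow> ((iota a \<otimes> W) \<otimes> iota b) \<otimes> inv (W \<otimes> iota c) = iota (a + b - c)"
proof -
  assume W: "W \<in> carrier E"
  have "(iota a \<otimes> W) \<otimes> iota b = iota (a + b) \<otimes> W"
    using W iota_central[OF W, of b] by (simp add: m_assoc iota_add)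
  moreover have "W \<otimes> iota c = iota c \<otimes> W" using iota_central[OF W] by simp
  ultimately show ?thesis using iota_conj1[OF W] by simp
qed

end

context xset begin

lemma pair_bound:
  assumes K: "\<forall>l. set l \<subseteq> Xg \<and> pr (word_eval E phi l) = \<one>\<^bsub>G\<^esub> \<longrightarrow>
    (\<exists>h. word_eval E phi l = iota h \<and> h \<le> K * int (length l))"
    and ix: "\<forall>x\<in>Xg. ix x \<in> Xg \<and> phi (ix x) = inv (phi x)"
    and w: "set w \<subseteq> Xg" and u: "set u \<subseteq> Xg" and pe: "pr (word_eval E phi w) = pr (word_eval E phi u)"
  shows "\<exists>j. word_eval E phi w = iota j \<otimes> word_eval E phi u \<and> j \<le> K * (int (length w) + int (length u))"
proof -
  define iu where "iu = rev (map ix u)"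
  have iuS: "set iu \<subseteq> Xg" unfolding iu_def using ix u by auto
  have iue: "word_eval E phi iu = inv (word_eval E phi u)"
    unfolding iu_def using ix u phiX by (intro word_eval_rev_inv) auto
  have W: "word_eval E phi w \<in> carrier E" and U: "word_eval E phi u \<in> carrier E"
    using evX_closed w u by auto
  have le: "word_eval E phi (w @ iu) = word_eval E phi w \<otimes> inv (word_eval E phi u)"
    using evX_append[OF w iuS] iue by simp
  have "pr (word_eval E phi (w @ iu)) = pr (word_eval E phi u) \<otimes>\<^bsub>G\<^esub> inv\<^bsub>G\<^esub> pr (word_eval E phi u)"
    unfolding le using pr_mult[OF W inv_closed[OF U]] pr_inv[OF U] pe by simp
  also have "\<dots> = \<one>\<^bsub>G\<^esub>" by (rule group.r_inv[OF grpG pr_closed[OF U]])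
  finally obtain h where h: "word_eval E phi (w @ iu) = iota h" "h \<le> K * int (length (w @ iu))"
    using K w iuS by (metis Un_subset_iff set_append)
  have "word_eval E phi w = iota h \<otimes> word_eval E phi u"
    using inv_solve_right'[OF iota_closed W U] h(1) le by simp
  moreover have "length iu = length u" unfolding iu_def by simp
  ultimately show ?thesis using h(2) by (intro exI[of _ h]) (simp add: algebra_simps)
qed

end


context xset begin

lemma lift_words:
  assumes "set us \<subseteq> (\<lambda>x. pr (phi x)) ` Xg"
  shows "\<exists>u. set u \<subseteq> Xg \<and> map (\<lambda>x. pr (phi x)) u = us"
proof -
  define f where "f = (\<lambda>x. pr (phi x))"
  define u where "u = map (inv_into Xg f) us"
  have mw: "map f u = us" unfolding u_def map_map
  proof (rule map_idI)
    fix x assume "x \<in> set us"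
    then have "x \<in> f ` Xg" using assms unfolding f_def by blast
    then show "(f \<circ> inv_into Xg f) x = x" by (simp add: f_inv_into_f)
  qed
  have sw: "set u \<subseteq> Xg"
  proof
    fix y assume "y \<in> set u"
    then obtain x where x: "x \<in> set us" "y = inv_into Xg f x" unfolding u_def by auto
    then have "x \<in> f ` Xg" using assms unfolding f_def by blast
    then show "y \<in> Xg" using x(2) by (simp add: inv_into_into)
  qed
  show ?thesis using mw sw unfolding f_def by blast
qed

lemma prX_eval: "set w \<subseteq> Xg \<Longrightarrow> word_eval G id (map (\<lambda>x. pr (phi x)) w) = pr (word_eval E phi w)"
proof -
  assume w: "set w \<subseteq> Xg"
  have "pr (word_eval E phi w) = word_eval G (pr \<circ> phi) w"
    using w phiX by (intro word_eval_hom[OF grpE grpG pr_hom]) auto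
  moreover have "word_eval G id (map (\<lambda>x. pr (phi x)) w) = word_eval G (pr \<circ> phi) w"
    by (simp add: word_eval_map comp_def)
  ultimately show ?thesis by simp
qed

lemma gm': "gen_metric G ((\<lambda>x. pr (phi x)) ` Xg)"
proof (rule gen_metric.intro[OF grpG], unfold gen_metric_axioms_def, intro conjI)
  show "(\<lambda>x. pr (phi x)) ` Xg \<subseteq> carrier G" using phiX pr_closed by auto
  show "\<forall>s\<in>(\<lambda>x. pr (phi x)) ` Xg. inv\<^bsub>G\<^esub> s \<in> (\<lambda>x. pr (phi x)) ` Xg"
  proof
    fix s assume "s \<in> (\<lambda>x. pr (phi x)) ` Xg"
    then obtain x where x: "x \<in> Xg" "s = pr (phi x)" by blast
    then have "inv (phi x) \<in> phi ` Xg" using symm by blast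
    then obtain y where y: "y \<in> Xg" "inv (phi x) = phi y" by (rule imageE)
    have "inv\<^bsub>G\<^esub> s = pr (phi y)" using x y pr_inv phiX by (metis image_subset_iff)
    then show "inv\<^bsub>G\<^esub> s \<in> (\<lambda>x. pr (phi x)) ` Xg" using y by blast
  qed
  show "\<forall>g\<in>carrier G. \<exists>ws. set ws \<subseteq> (\<lambda>x. pr (phi x)) ` Xg \<and> word_eval G id ws = g"
  proof
    fix g assume "g \<in> carrier G"
    then obtain e where e: "e \<in> carrier E" "pr e = g" using pr_surj by (metis imageE)
    then obtain w where w: "set w \<subseteq> Xg" "word_eval E phi w = e" using X_reach by blast
    then show "\<exists>ws. set ws \<subseteq> (\<lambda>x. pr (phi x)) ` Xg \<and> word_eval G id ws = g"
      using prX_eval[OF w(1)] e by (intro exI[of _ "map (\<lambda>x. pr (phi x)) w"]) auto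
  qed
qed

end


context xset begin

lemma part1:
  assumes K: "K \<ge> 0" "\<forall>l. set l \<subseteq> Xg \<and> pr (word_eval E phi l) = \<one>\<^bsub>G\<^esub> \<longrightarrow>
    (\<exists>h. word_eval E phi l = iota h \<and> h \<le> K * int (length l))"
    and ix: "\<forall>x\<in>Xg. ix x \<in> Xg \<and> phi (ix x) = inv (phi x)"
    and C: "C = K + 1"
    and g: "g \<in> carrier G"
  shows "\<exists>w0. set w0 \<subseteq> Xg \<and> pr (word_eval E phi w0) = g \<and>
        (\<forall>w. set w \<subseteq> Xg \<and> pr (word_eval E phi w) = g \<longrightarrow>
           fibre_le iota E (word_eval E phi w \<otimes>\<^bsub>E\<^esub> iota (- C * int (length w)))
                        (word_eval E phi w0 \<otimes>\<^bsub>E\<^esub> iota (- C * int (length w0))))"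
proof -
  define val where "val w = word_eval E phi w \<otimes> iota (- C * int (length w))" for w
  obtain e where e: "e \<in> carrier E" "pr e = g" using pr_surj g by (metis imageE)
  then obtain u0 where u0: "set u0 \<subseteq> Xg" "word_eval E phi u0 = e" using X_reach by blast
  define U0 where "U0 = word_eval E phi u0"
  have U0c: "U0 \<in> carrier E" unfolding U0_def using evX_closed u0 by blast
  have valform: "\<exists>j. val w = iota (j - C * int (length w)) \<otimes> U0 \<and> j \<le> K * (int (length w) + int (length u0))"
    if w: "set w \<subseteq> Xg" "pr (word_eval E phi w) = g" for w
  proof -
    obtain j where j: "word_eval E phi w = iota j \<otimes> U0" "j \<le> K * (int (length w) + int (length u0))"
      using pair_bound[OF K(2) ix w(1) u0(1)] w(2) u0 e unfolding U0_def by auto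
    have "val w = iota j \<otimes> (U0 \<otimes> iota (- C * int (length w)))"
      unfolding val_def j(1) using U0c by (simp add: m_assoc)
    also have "\<dots> = iota j \<otimes> (iota (- C * int (length w)) \<otimes> U0)" using iota_central[OF U0c] by simp
    also have "\<dots> = iota (j - C * int (length w)) \<otimes> U0" using U0c by (simp add: m_assoc[symmetric] iota_add[symmetric])
    finally show ?thesis using j(2) by blast
  qed
  define F where "F = {m. \<exists>w. set w \<subseteq> Xg \<and> pr (word_eval E phi w) = g \<and> val w = iota m \<otimes> U0}"
  have Fb: "\<forall>m\<in>F. m \<le> K * int (length u0)"
  proof
    fix m assume "m \<in> F"
    then obtain w where w: "set w \<subseteq> Xg" "pr (word_eval E phi w) = g" "val w = iota m \<otimes> U0" unfolding F_def by blast
    obtain j where j: "val w = iota (j - C * int (length w)) \<otimes> U0" "j \<le> K * (int (length w) + int (length u0))"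
      using valform[OF w(1,2)] by blast
    have "iota m \<otimes> U0 = iota (j - C * int (length w)) \<otimes> U0" using w(3) j(1) by simp
    then have "iota m = iota (j - C * int (length w))" by (rule r_cancel) (auto simp: U0c)
    then have "m = j - C * int (length w)" by (rule iota_inj)
    then show "m \<le> K * int (length u0)" using j(2) C by (simp add: algebra_simps)
  qed
  obtain m0 where "val u0 = iota m0 \<otimes> U0" using valform[OF u0(1)] u0 e by blast
  then have "m0 \<in> F" unfolding F_def using u0 e by blast
  then obtain mx where mx: "mx \<in> F" "\<forall>m\<in>F. m \<le> mx" using int_set_has_max[OF \<open>m0 \<in> F\<close> Fb] by blast
  then obtain w0 where w0: "set w0 \<subseteq> Xg" "pr (word_eval E phi w0) = g" "val w0 = iota mx \<otimes> U0" unfolding F_def by blast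
  have "fibre_le iota E (val w) (val w0)" if w: "set w \<subseteq> Xg" "pr (word_eval E phi w) = g" for w
  proof -
    obtain j where j: "val w = iota (j - C * int (length w)) \<otimes> U0"
      using valform[OF w] by blast
    then have "j - C * int (length w) \<in> F" unfolding F_def using w by blast
    then have le: "j - C * int (length w) \<le> mx" using mx by blast
    have "val w0 \<otimes> inv (val w) = iota (mx - (j - C * int (length w)))"
      unfolding w0(3) j by (rule iota_conj1[OF U0c])
    then show ?thesis unfolding fibre_le_def using le by (intro exI[of _ "mx - (j - C * int (length w))"]) auto
  qed
  then show ?thesis using w0 unfolding val_def by blast
qed

end


context xset begin

lemma part2_key:
  assumes K: "K \<ge> 0" "\<forall>l. set l \<subseteq> Xg \<and> pr (word_eval E phi l) = \<one>\<^bsub>G\<^esub> \<longrightarrow>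
    (\<exists>h. word_eval E phi l = iota h \<and> h \<le> K * int (length l))"
    and ix: "\<forall>x\<in>Xg. ix x \<in> Xg \<and> phi (ix x) = inv (phi x)"
    and C: "C = K + 1"
    and w0: "set w0 \<subseteq> Xg" "pr (word_eval E phi w0) = g"
    and mx: "\<forall>w. set w \<subseteq> Xg \<and> pr (word_eval E phi w) = g \<longrightarrow>
           fibre_le iota E (word_eval E phi w \<otimes>\<^bsub>E\<^esub> iota (- C * int (length w)))
                        (word_eval E phi w0 \<otimes>\<^bsub>E\<^esub> iota (- C * int (length w0)))"
    and st: "s \<le> t" "t \<le> length w0"
  shows "word_dist G ((\<lambda>x. pr (phi x)) ` Xg) (pr (word_eval E phi (take s w0))) (pr (word_eval E phi (take t w0))) \<le> t - s
     \<and> int (t - s) \<le> (2 * K + 1) * int (word_dist G ((\<lambda>x. pr (phi x)) ` Xg) (pr (word_eval E phi (take s w0))) (pr (word_eval E phi (take t w0))))"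
proof -
  interpret gm: gen_metric G "(\<lambda>x. pr (phi x)) ` Xg" by (rule gm')
  define S' where "S' = (\<lambda>x. pr (phi x)) ` Xg"
  define ps where "ps = pr (word_eval E phi (take s w0))"
  define pt where "pt = pr (word_eval E phi (take t w0))"
  define A where "A = take s w0"
  define v where "v = take (t - s) (drop s w0)"
  define B where "B = drop t w0"
  have AS: "set A \<subseteq> Xg" "set v \<subseteq> Xg" "set B \<subseteq> Xg" unfolding A_def v_def B_def
    using w0(1) set_take_subset set_drop_subset by fastforce+
  have tk: "take t w0 = A @ v" unfolding A_def v_def using take_add[of s "t - s" w0] st by simp
  have w0s: "w0 = A @ v @ B" using tk unfolding B_def by (metis append.assoc append_take_drop_id)
  have lv: "length v = t - s" unfolding v_def using st by simp
  have EA: "word_eval E phi A \<in> carrier E" "word_eval E phi v \<in> carrier E" "word_eval E phi B \<in> carrier E"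
    using evX_closed AS by blast+
  have pt_eq: "pt = ps \<otimes>\<^bsub>G\<^esub> pr (word_eval E phi v)"
    unfolding pt_def ps_def tk A_def[symmetric] using evX_append[OF AS(1,2)] pr_mult EA by simp
  have psc: "ps \<in> carrier G" "pr (word_eval E phi v) \<in> carrier G" unfolding ps_def A_def[symmetric]
    using pr_closed EA by auto
  have ipt: "inv\<^bsub>G\<^esub> ps \<otimes>\<^bsub>G\<^esub> pt = pr (word_eval E phi v)"
    unfolding pt_eq using psc by (simp add: group.is_monoid[OF grpG] monoid.m_assoc[OF group.is_monoid[OF grpG], symmetric] group.l_inv[OF grpG])
  have ptc: "pt \<in> carrier G" unfolding pt_eq using psc by (simp add: group.is_monoid[OF grpG] monoid.m_closed)
  have "word_dist G S' ps pt \<le> length (map (\<lambda>x. pr (phi x)) v)"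
    unfolding S'_def using AS(2) prX_eval[OF AS(2)] ipt by (intro gm.dist_le) auto
  then have a: "word_dist G S' ps pt \<le> t - s" using lv by simp
  obtain us where us: "set us \<subseteq> S'" "length us = word_dist G S' ps pt" "word_eval G id us = inv\<^bsub>G\<^esub> ps \<otimes>\<^bsub>G\<^esub> pt"
    using gm.dist_ex[OF psc(1) ptc] unfolding S'_def by blast
  obtain u where u: "set u \<subseteq> Xg" "map (\<lambda>x. pr (phi x)) u = us" using lift_words us(1) unfolding S'_def by blast
  have EU: "word_eval E phi u \<in> carrier E" using evX_closed u by blast
  have pu: "pr (word_eval E phi u) = pr (word_eval E phi v)"
    using prX_eval[OF u(1)] u(2) us(3) ipt by simp
  have lu: "length u = word_dist G S' ps pt" using u us by auto
  obtain j where j: "word_eval E phi v = iota j \<otimes> word_eval E phi u" "j \<le> K * (int (length v) + int (length u))"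
    using pair_bound[OF K(2) ix AS(2) u(1) pu[symmetric]] by blast
  define w1 where "w1 = A @ u @ B"
  have w1S: "set w1 \<subseteq> Xg" unfolding w1_def using AS u by auto
  have ew0: "word_eval E phi w0 = word_eval E phi A \<otimes> (word_eval E phi v \<otimes> word_eval E phi B)"
    using w0s evX_append AS by (metis Un_subset_iff set_append)
  have ew1: "word_eval E phi w1 = word_eval E phi A \<otimes> (word_eval E phi u \<otimes> word_eval E phi B)"
    unfolding w1_def using evX_append AS u by (metis Un_subset_iff set_append)
  have W1c: "word_eval E phi w1 \<in> carrier E" using evX_closed w1S by blast
  have pw1: "pr (word_eval E phi w1) = g"
  proof -
    have "pr (word_eval E phi w1) = pr (word_eval E phi A) \<otimes>\<^bsub>G\<^esub> (pr (word_eval E phi u) \<otimes>\<^bsub>G\<^esub> pr (word_eval E phi B))"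
      unfolding ew1 using EA EU pr_mult by simp
    also have "\<dots> = pr (word_eval E phi w0)"
      unfolding ew0 pu using EA EU pr_mult by simp
    finally show ?thesis using w0 by simp
  qed
  have ew0': "word_eval E phi w0 = iota j \<otimes> word_eval E phi w1"
  proof -
    have "word_eval E phi w0 = word_eval E phi A \<otimes> (iota j \<otimes> (word_eval E phi u \<otimes> word_eval E phi B))"
      unfolding ew0 j(1) using EA EU by (simp add: m_assoc)
    also have "\<dots> = (word_eval E phi A \<otimes> iota j) \<otimes> (word_eval E phi u \<otimes> word_eval E phi B)"
      using EA EU by (simp add: m_assoc)
    also have "\<dots> = (iota j \<otimes> word_eval E phi A) \<otimes> (word_eval E phi u \<otimes> word_eval E phi B)"
      using iota_central[OF EA(1)] by simp
    also have "\<dots> = iota j \<otimes> word_eval E phi w1" unfolding ew1 using EA EU by (simp add: m_assoc)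
    finally show ?thesis .
  qed
  define L0 where "L0 = int (length w0)"
  define L1 where "L1 = int (length w1)"
  obtain m where m: "m \<ge> 0" "word_eval E phi w0 \<otimes> iota (- C * L0) \<otimes> inv (word_eval E phi w1 \<otimes> iota (- C * L1)) = iota m"
    using mx w1S pw1 unfolding fibre_le_def L0_def L1_def by blast
  have "word_eval E phi w0 \<otimes> iota (- C * L0) \<otimes> inv (word_eval E phi w1 \<otimes> iota (- C * L1)) = iota (j + - C * L0 - - C * L1)"
    unfolding ew0' by (rule iota_conj2[OF W1c])
  then have "m = j + - C * L0 - - C * L1" using m(2) iota_inj by metis
  moreover have "L0 = int (length A) + int (t - s) + int (length B)" unfolding L0_def using w0s lv
    by (metis length_append of_nat_add add.assoc)
  moreover have "L1 = int (length A) + int (length u) + int (length B)" unfolding L1_def w1_def by simp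
  ultimately have "C * (int (t - s) - int (length u)) \<le> j" using m(1) by (simp add: algebra_simps)
  then have "(K + 1) * (int (t - s) - int (length u)) \<le> K * (int (t - s) + int (length u))"
    using j(2) lv C by simp
  then have b: "int (t - s) \<le> (2 * K + 1) * int (length u)" by (simp add: algebra_simps)
  show ?thesis using a b lu unfolding S'_def ps_def pt_def by simp
qed

end


lemma qg_aux:
  fixes s t d :: nat and K :: int
  assumes "s \<le> t" "d \<le> t - s" "int (t - s) \<le> (2 * K + 1) * int d" "K \<ge> 0"
  shows "\<bar>real s - real t\<bar> / real_of_int (2 * K + 1) - 0 \<le> real d \<and>
         real d \<le> real_of_int (2 * K + 1) * \<bar>real s - real t\<bar> + 0"
proof -
  have ab: "\<bar>real s - real t\<bar> = real (t - s)" using assms(1) by simp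
  have lpos: "real_of_int (2 * K + 1) \<ge> 1" using assms(4) by simp
  have "real_of_int (int (t - s)) \<le> real_of_int ((2 * K + 1) * int d)"
    using assms(3) by (simp only: of_int_le_iff)
  then have i1: "real (t - s) \<le> real_of_int (2 * K + 1) * real d" by simp
  have "real (t - s) / real_of_int (2 * K + 1) \<le> real d"
    using i1 lpos by (simp add: divide_le_eq mult.commute)
  moreover have "real d \<le> real (t - s)" using assms(2) by simp
  moreover have "real (t - s) \<le> real_of_int (2 * K + 1) * real (t - s)"
    using lpos by (simp add: mult_le_cancel_right1)
  ultimately show ?thesis unfolding ab by simp
qed

context xset begin

lemma main:
  shows "\<exists>C::int. C > 0 \<and>
    (\<forall>g\<in>carrier G. \<exists>w0. set w0 \<subseteq> Xg \<and> pr (word_eval E phi w0) = g \<and>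
        (\<forall>w. set w \<subseteq> Xg \<and> pr (word_eval E phi w) = g \<longrightarrow>
           fibre_le iota E (word_eval E phi w \<otimes>\<^bsub>E\<^esub> iota (- C * int (length w)))
                        (word_eval E phi w0 \<otimes>\<^bsub>E\<^esub> iota (- C * int (length w0))))) \<and>
    (\<exists>lam::real. lam > 0 \<and>
      (\<forall>g\<in>carrier G. \<forall>w0. set w0 \<subseteq> Xg \<and> pr (word_eval E phi w0) = g \<and>
        (\<forall>w. set w \<subseteq> Xg \<and> pr (word_eval E phi w) = g \<longrightarrow>
           fibre_le iota E (word_eval E phi w \<otimes>\<^bsub>E\<^esub> iota (- C * int (length w)))
                        (word_eval E phi w0 \<otimes>\<^bsub>E\<^esub> iota (- C * int (length w0))))
        \<longrightarrow> quasigeodesic_path (word_dist G ((\<lambda>x. pr (phi x)) ` Xg)) lam 0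
              (\<lambda>t. pr (word_eval E phi (take t w0))) (length w0)))"
proof -
  obtain K where K: "K \<ge> 0" "\<forall>l. set l \<subseteq> Xg \<and> pr (word_eval E phi l) = \<one>\<^bsub>G\<^esub> \<longrightarrow>
    (\<exists>h. word_eval E phi l = iota h \<and> h \<le> K * int (length l))" using X_height by blast
  obtain ix where ix: "\<forall>x\<in>Xg. ix x \<in> Xg \<and> phi (ix x) = inv (phi x)" using X_inv by blast
  define C where "C = K + 1"
  interpret gm: gen_metric G "(\<lambda>x. pr (phi x)) ` Xg" by (rule gm')
  have P1: "\<forall>g\<in>carrier G. \<exists>w0. set w0 \<subseteq> Xg \<and> pr (word_eval E phi w0) = g \<and>
        (\<forall>w. set w \<subseteq> Xg \<and> pr (word_eval E phi w) = g \<longrightarrow>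
           fibre_le iota E (word_eval E phi w \<otimes>\<^bsub>E\<^esub> iota (- C * int (length w)))
                        (word_eval E phi w0 \<otimes>\<^bsub>E\<^esub> iota (- C * int (length w0))))"
    using part1[OF K ix C_def] by blast
  have P2: "quasigeodesic_path (word_dist G ((\<lambda>x. pr (phi x)) ` Xg)) (real_of_int (2 * K + 1)) 0
              (\<lambda>t. pr (word_eval E phi (take t w0))) (length w0)"
    if g: "g \<in> carrier G" and w0: "set w0 \<subseteq> Xg" "pr (word_eval E phi w0) = g"
      and mx: "\<forall>w. set w \<subseteq> Xg \<and> pr (word_eval E phi w) = g \<longrightarrow>
           fibre_le iota E (word_eval E phi w \<otimes>\<^bsub>E\<^esub> iota (- C * int (length w)))
                        (word_eval E phi w0 \<otimes>\<^bsub>E\<^esub> iota (- C * int (length w0)))" for g w0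
  proof -
    define p where "p t = pr (word_eval E phi (take t w0))" for t
    define d where "d = word_dist G ((\<lambda>x. pr (phi x)) ` Xg)"
    have pc: "p t \<in> carrier G" for t unfolding p_def
      using pr_closed evX_closed w0(1) set_take_subset by (metis subset_trans)
    have key: "d (p s) (p t) \<le> t - s \<and> int (t - s) \<le> (2 * K + 1) * int (d (p s) (p t))"
      if "s \<le> t" "t \<le> length w0" for s t
      unfolding p_def d_def by (rule part2_key[OF K ix C_def w0 mx that])
    show ?thesis unfolding quasigeodesic_path_def p_def[symmetric] d_def[symmetric]
    proof (intro allI impI)
      fix s t assume st: "s \<le> length w0" "t \<le> length w0"
      show "\<bar>real s - real t\<bar> / real_of_int (2 * K + 1) - 0 \<le> real (d (p s) (p t)) \<and>
         real (d (p s) (p t)) \<le> real_of_int (2 * K + 1) * \<bar>real s - real t\<bar> + 0"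
      proof (cases "s \<le> t")
        case True
        then show ?thesis using key[OF True st(2)] qg_aux K(1) by blast
      next
        case False
        then have ts: "t \<le> s" by simp
        have "d (p s) (p t) = d (p t) (p s)" unfolding d_def by (rule gm.dist_sym[OF pc pc])
        then show ?thesis using key[OF ts st(1)] qg_aux[OF ts _ _ K(1)] by (simp add: abs_minus_commute)
      qed
    qed
  qed
  have "C > 0" unfolding C_def using K by simp
  moreover have "real_of_int (2 * K + 1) > 0" using K by simp
  ultimately show ?thesis using P1 P2 by blast
qed

end
theorem lemma2p1:
  fixes G :: "('g, 'c) monoid_scheme" and E :: "('e, 'b) monoid_scheme"
    and iota :: "int \<Rightarrow> 'e" and pr :: "'e \<Rightarrow> 'g"
    and Xg :: "'x set" and phi :: "'x \<Rightarrow> 'e"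
  assumes hyp: "hyperbolic_group G"
    and ext: "central_extension iota E pr G"
    and finX: "finite Xg"
    and phiX: "phi ` Xg \<subseteq> carrier E"
    and symm: "\<forall>x\<in>Xg. inv\<^bsub>E\<^esub> (phi x) \<in> phi ` Xg"
    and gen: "generate E (phi ` Xg) = carrier E"
  shows "\<exists>C::int. C > 0 \<and>
    (\<forall>g\<in>carrier G. \<exists>w0. set w0 \<subseteq> Xg \<and> pr (word_eval E phi w0) = g \<and>
        (\<forall>w. set w \<subseteq> Xg \<and> pr (word_eval E phi w) = g \<longrightarrow>
           fibre_le iota E (word_eval E phi w \<otimes>\<^bsub>E\<^esub> iota (- C * int (length w)))
                        (word_eval E phi w0 \<otimes>\<^bsub>E\<^esub> iota (- C * int (length w0))))) \<and>
    (\<exists>lam::real. lam > 0 \<and>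
      (\<forall>g\<in>carrier G. \<forall>w0. set w0 \<subseteq> Xg \<and> pr (word_eval E phi w0) = g \<and>
        (\<forall>w. set w \<subseteq> Xg \<and> pr (word_eval E phi w) = g \<longrightarrow>
           fibre_le iota E (word_eval E phi w \<otimes>\<^bsub>E\<^esub> iota (- C * int (length w)))
                        (word_eval E phi w0 \<otimes>\<^bsub>E\<^esub> iota (- C * int (length w0))))
        \<longrightarrow> quasigeodesic_path (word_dist G ((\<lambda>x. pr (phi x)) ` Xg)) lam 0
              (\<lambda>t. pr (word_eval E phi (take t w0))) (length w0)))"
proof -
  interpret xset G E iota pr Xg phi
    by (rule xset.intro[OF cext.intro[OF ext]]) (unfold xset_axioms_def, use hyp finX phiX symm gen in blast)
  show ?thesis by (rule main)
qed

end
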